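(* Let $\alpha\ge1$ and suppose an algorithm for the maximum density subtree problem is given which, on any instance, returns a subtree whose density is at least $1/\alpha$ times the maximum density. Then the greedy algorithm (described in the context) using this algorithm is a $4\alpha$-approximation algorithm for the expanding search problem: the expanding search $\sigma^{\mathrm g}$ it returns satisfies $c(\sigma^{\mathrm g})\le 4\alpha\,c(\sigma^\star)$, where $\sigma^\star$ is an optimal expanding search.
   Context: Expanding search problem: $G=(V,E)$ is a connected graph with root $r$, probabilities $p_v\in[0,1]$ with $p_r=0$, $\sum_v p_v=1$, and edge lengths $\lambda_e>0$; $n=|V\setminus\{r\}|$. An expanding search is a sequence of edges $\sigma=(e_1,\dots,e_n)$ with $r\in e_1$ such that each $e_k$ connects an unvisited vertex to a previously visited vertex (so $\{e_1,\dots,e_k\}$ is a tree containing $r$ for every $k$). For $v\in V$, $\lambda(v,\sigma)=\sum_{i=1}^k\lambda_{e_i}$ where $e_k$ is the first edge of $\sigma$ containing $v$ (and $\lambda(r,\sigma)=0$). The search cost is $c(\sigma)=\sum_{v\in V}p_v\lambda(v,\sigma)$; the problem is to minimize it. Maximum density subtree problem: given a graph $H$ with root $r$, nonnegative vertex weights $p$ and positive edge lengths $\ell$, among subtrees $T$ of $H$ containing $r$ with positive total length, maximize the density $\rho(T)=p(V[T])/\ell(E[T])$ (sums of weights and lengths). Contraction: for $S\subseteq V$ with $r\in S$, $G/S$ has vertex set $(V\setminus S)\cup\{r\}$ and edges: all $\{v,w\}\in E$ with $v,w\in V\setminus S$ (length $\lambda_{\{v,w\}}$), and $\{r,w\}$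 for each $w\in V\setminus S$ for which $C(w,S)=\{\{v,w\}\in E: v\in S\}$ is nonempty, with length $\min_{e'\in C(w,S)}\lambda_{e'}$. Denote these lengths $\lambda^S$. Greedy algorithm: set $i\gets1$, $S\gets\{r\}$. While some $v\in V\setminus S$ has $p_v>0$: let $T_i$ be the tree returned by the given approximation algorithm for the maximum density subtree problem on $G/S$ with probabilities $(p_v)$ and lengths $\lambda^S$; let $\sigma_i$ be an arbitrary expanding search of tree $T_i$ (from $r$); set $S\gets S\cup V[T_i]$ and increment $i$. Finally let $\sigma^{\mathrm g}$ be the expanding search obtained by concatenating $\sigma_1,\sigma_2,\dots$ and replacing each edge incident to $r$ in a contracted graph by a corresponding length-minimizing edge of $G$ (vertices of zero probability left unvisited are appended arbitrarily). *)

theory Defs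
  imports Main Complex_Main
begin

definition adj :: "'v set set \<Rightarrow> ('v \<times> 'v) set" where
  "adj F = {(u, w). {u, w} \<in> F}"

definition simple_graph :: "'v set \<Rightarrow> 'v set set \<Rightarrow> bool" where
  "simple_graph V E \<longleftrightarrow> finite V \<and>
     (\<forall>e\<in>E. \<exists>u w. e = {u, w} \<and> u \<noteq> w \<and> u \<in> V \<and> w \<in> V)"

definition connected_from :: "'v set \<Rightarrow> 'v set set \<Rightarrow> 'v \<Rightarrow> bool" where
  "connected_from V E r \<longleftrightarrow> (\<forall>v\<in>V. (r, v) \<in> (adj E)\<^sup>*)"

definition tree_verts :: "'v \<Rightarrow> 'v set set \<Rightarrow> 'v set" where
  "tree_verts s T = insert s (\<Union>T)"

definition rooted_subtree :: "'v set set \<Rightarrow> 'v \<Rightarrow> 'v set set \<Rightarrow> bool" where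
  "rooted_subtree F s T \<longleftrightarrow> T \<subseteq> F \<and> finite T \<and>
     card (tree_verts s T) = card T + 1 \<and> connected_from (tree_verts s T) T s"

definition mds_feasible :: "'v set set \<Rightarrow> ('v set \<Rightarrow> real) \<Rightarrow> 'v \<Rightarrow> 'v set set \<Rightarrow> bool" where
  "mds_feasible F len s T \<longleftrightarrow> rooted_subtree F s T \<and> sum len T > 0"

definition density :: "('v \<Rightarrow> real) \<Rightarrow> ('v set \<Rightarrow> real) \<Rightarrow> 'v \<Rightarrow> 'v set set \<Rightarrow> real" where
  "density q len s T = sum q (tree_verts s T) / sum len T"

definition max_density ::
  "'v set set \<Rightarrow> ('v set \<Rightarrow> real) \<Rightarrow> ('v \<Rightarrow> real) \<Rightarrow> 'v \<Rightarrow> real" where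
  "max_density F len q s = Max (density q len s ` {T. mds_feasible F len s T})"

text \<open>A valid instance (H = (W,F), root s, nonnegative weights q, positive lengths len)
  having at least one feasible subtree (so that the maximum density is defined).\<close>
definition mds_instance ::
  "'v set \<Rightarrow> 'v set set \<Rightarrow> ('v set \<Rightarrow> real) \<Rightarrow> ('v \<Rightarrow> real) \<Rightarrow> 'v \<Rightarrow> bool" where
  "mds_instance W F len q s \<longleftrightarrow> simple_graph W F \<and> s \<in> W \<and>
     (\<forall>e\<in>F. len e > 0) \<and> (\<forall>v\<in>W. q v \<ge> 0) \<and> (\<exists>T. mds_feasible F len s T)"

type_synonym 'v mds_algorithm =
  "'v set \<Rightarrow> 'v set set \<Rightarrow> ('v set \<Rightarrow> real) \<Rightarrow> ('v \<Rightarrow> real) \<Rightarrow> 'v \<Rightarrow> 'v set set"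

definition mds_approx :: "real \<Rightarrow> 'v mds_algorithm \<Rightarrow> bool" where
  "mds_approx \<alpha> A \<longleftrightarrow> (\<forall>W F len q s. mds_instance W F len q s \<longrightarrow>
      mds_feasible F len s (A W F len q s) \<and>
      density q len s (A W F len q s) \<ge> max_density F len q s / \<alpha>)"

definition visited :: "'v \<Rightarrow> 'v set list \<Rightarrow> nat \<Rightarrow> 'v set" where
  "visited r \<sigma> k = insert r (\<Union>(set (take k \<sigma>)))"

definition expanding_search :: "'v set \<Rightarrow> 'v set set \<Rightarrow> 'v \<Rightarrow> 'v set list \<Rightarrow> bool" where
  "expanding_search W F r \<sigma> \<longleftrightarrow> length \<sigma> = card (W - {r}) \<and>
     (\<forall>k < length \<sigma>. \<sigma> ! k \<in> F \<and>
        (\<exists>u w. \<sigma> ! k = {u, w} \<and> u \<in> visited r \<sigma> k \<and> w \<notin> visited r \<sigma> k))"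

definition search_time :: "('v set \<Rightarrow> real) \<Rightarrow> 'v \<Rightarrow> 'v set list \<Rightarrow> 'v \<Rightarrow> real" where
  "search_time lam r \<sigma> v = (if v = r then 0 else
     sum_list (map lam (take (Suc (LEAST k. k < length \<sigma> \<and> v \<in> \<sigma> ! k)) \<sigma>)))"

definition search_cost ::
  "'v set \<Rightarrow> ('v \<Rightarrow> real) \<Rightarrow> ('v set \<Rightarrow> real) \<Rightarrow> 'v \<Rightarrow> 'v set list \<Rightarrow> real" where
  "search_cost V p lam r \<sigma> = (\<Sum>v\<in>V. p v * search_time lam r \<sigma> v)"

definition contr_edges :: "'v set \<Rightarrow> 'v set set \<Rightarrow> 'v \<Rightarrow> 'v set \<Rightarrow> 'v set set" where
  "contr_edges V E r S = {e \<in> E. e \<inter> S = {}} \<union>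
     {{r, w} | w. w \<in> V - S \<and> (\<exists>v\<in>S. {v, w} \<in> E)}"

definition contr_len :: "'v set set \<Rightarrow> ('v set \<Rightarrow> real) \<Rightarrow> 'v \<Rightarrow> 'v set \<Rightarrow> 'v set \<Rightarrow> real" where
  "contr_len E lam r S e = (if e \<inter> S = {} then lam e
     else Min (lam ` {e' \<in> E. e' \<inter> S \<noteq> {} \<and> e' - S = e - {r}}))"

definition contr_edge :: "'v \<Rightarrow> 'v set \<Rightarrow> 'v set \<Rightarrow> 'v set" where
  "contr_edge r S e = (if e \<inter> S = {} then e else insert r (e - S))"

definition greedy_tree ::
  "'v set \<Rightarrow> 'v set set \<Rightarrow> ('v set \<Rightarrow> real) \<Rightarrow> ('v \<Rightarrow> real) \<Rightarrow> 'v \<Rightarrow> 'v mds_algorithm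
    \<Rightarrow> 'v set \<Rightarrow> 'v set set" where
  "greedy_tree V E lam p r A S =
     A (insert r (V - S)) (contr_edges V E r S) (contr_len E lam r S) p r"

primrec greedy_set ::
  "'v set \<Rightarrow> 'v set set \<Rightarrow> ('v set \<Rightarrow> real) \<Rightarrow> ('v \<Rightarrow> real) \<Rightarrow> 'v \<Rightarrow> 'v mds_algorithm
    \<Rightarrow> nat \<Rightarrow> 'v set" where
  "greedy_set V E lam p r A 0 = {r}"
| "greedy_set V E lam p r A (Suc i) =
     greedy_set V E lam p r A i \<union>
     tree_verts r (greedy_tree V E lam p r A (greedy_set V E lam p r A i))"

definition greedy_continue :: "'v set \<Rightarrow> ('v \<Rightarrow> real) \<Rightarrow> 'v set \<Rightarrow> bool" where
  "greedy_continue V p S \<longleftrightarrow> (\<exists>v \<in> V - S. p v > 0)"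

text \<open>b is an admissible block for iteration i: b consists of edges of G; its image in
  G/S is an expanding search (from r) of the tree T_i; each edge incident to r in G/S
  has been replaced by a length-minimizing edge of G.\<close>
definition greedy_block ::
  "'v set \<Rightarrow> 'v set set \<Rightarrow> ('v set \<Rightarrow> real) \<Rightarrow> ('v \<Rightarrow> real) \<Rightarrow> 'v \<Rightarrow> 'v mds_algorithm
    \<Rightarrow> nat \<Rightarrow> 'v set list \<Rightarrow> bool" where
  "greedy_block V E lam p r A i b \<longleftrightarrow>
     (let S = greedy_set V E lam p r A i; T = greedy_tree V E lam p r A S in
       expanding_search (tree_verts r T) T r (map (contr_edge r S) b) \<and>
       (\<forall>e \<in> set b. e \<in> E \<and>
          (e \<inter> S \<noteq> {} \<longrightarrow> lam e = contr_len E lam r S (contr_edge r S e))))"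

text \<open>\<sigma> is a possible output of the greedy algorithm: the concatenation of admissible
  blocks for the iterations 0..m-1 (m = number of iterations of the while loop),
  followed by arbitrary edges visiting the remaining (zero-probability) vertices,
  such that the whole is an expanding search of G.\<close>
definition greedy_output ::
  "'v set \<Rightarrow> 'v set set \<Rightarrow> ('v set \<Rightarrow> real) \<Rightarrow> ('v \<Rightarrow> real) \<Rightarrow> 'v \<Rightarrow> 'v mds_algorithm
    \<Rightarrow> 'v set list \<Rightarrow> bool" where
  "greedy_output V E lam p r A \<sigma> \<longleftrightarrow>
     (\<exists>m bs tl.
        (\<forall>i < m. greedy_continue V p (greedy_set V E lam p r A i)) \<and>
        \<not> greedy_continue V p (greedy_set V E lam p r A m) \<and>
        length bs = m \<and> (\<forall>i < m. greedy_block V E lam p r A i (bs ! i)) \<and>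
        \<sigma> = concat bs @ tl \<and>
        expanding_search V E r \<sigma>)"

end

theory Submission
  imports Defs "HOL-Analysis.Henstock_Kurzweil_Integration"
begin

lemma step_int:
  fixes a c B :: real
  assumes "0 \<le> c" "c \<le> B"
  shows "((\<lambda>x. if x \<le> c then a else 0) has_integral (a * c)) {0..B}"
proof -
  have "((\<lambda>x. a) has_integral (a * c)) {0..c}"
    using has_integral_const_real[of a 0 c] assms by (simp add: mult.commute)
  then have "((\<lambda>x. if x \<in> {0..c} then a else 0) has_integral (a * c)) {0..B}"
    using assms by (subst has_integral_restrict) auto
  then show ?thesis
    by (rule has_integral_eq[rotated]) auto
qed

lemma hist:
  fixes w R t :: "nat \<Rightarrow> real" and p \<tau> :: "'v \<Rightarrow> real"
  assumes finV: "finite V" and pv: "\<forall>v\<in>V. p v \<ge> 0 \<and> \<tau> v \<ge> 0"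
    and wt: "\<forall>i<m. w i \<ge> 0 \<and> t i \<ge> 0"
    and wR: "\<forall>i<m. w i = R i - R (Suc i)" and Rm: "R m \<ge> 0"
    and key: "\<forall>i<m. R i \<le> 2 * (\<Sum>v\<in>V. if t i \<le> \<tau> v then p v else 0)"
  shows "(\<Sum>i<m. w i * t i) \<le> 2 * (\<Sum>v\<in>V. p v * \<tau> v)"
proof -
  define M where "M x = (\<Sum>v\<in>V. if x \<le> \<tau> v then p v else 0)" for x
  have Mmono: "M y \<le> M x" if "x \<le> y" for x y
    unfolding M_def using that pv by (intro sum_mono) auto
  have pw: "(\<Sum>i<m. if x \<le> t i then w i else 0) \<le> 2 * M x" for x
  proof (cases "\<exists>i<m. x \<le> t i")
    case False
    then have "(\<Sum>i<m. if x \<le> t i then w i else 0) = 0" by simp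
    moreover have "M x \<ge> 0" unfolding M_def using pv by (intro sum_nonneg) auto
    ultimately show ?thesis by simp
  next
    case True
    define i0 where "i0 = (LEAST i. i < m \<and> x \<le> t i)"
    have i0: "i0 < m" "x \<le> t i0" using LeastI_ex[OF True] unfolding i0_def by auto
    have lt: "t i < x" if "i < i0" for i
      using not_less_Least[of i "\<lambda>i. i < m \<and> x \<le> t i"] that i0 unfolding i0_def by auto
    have "(\<Sum>i<m. if x \<le> t i then w i else 0) \<le> (\<Sum>i<m. if i0 \<le> i then w i else 0)"
      using wt lt by (intro sum_mono) (auto simp: not_le dest: lt)
    also have "\<dots> = (\<Sum>i\<in>{i0..<m}. w i)"
      by (rule sum.mono_neutral_cong_right) auto
    also have "\<dots> = (\<Sum>i\<in>{i0..<m}. R i - R (Suc i))"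
      using wR by (intro sum.cong) auto
    also have "\<dots> = R i0 - R m"
      using sum_Suc_diff'[of i0 m "\<lambda>i. - R i"] i0 by simp
    also have "\<dots> \<le> 2 * M (t i0)" using key i0 Rm unfolding M_def by auto
    also have "\<dots> \<le> 2 * M x" using Mmono[OF i0(2)] by simp
    finally show ?thesis .
  qed
  define B where "B = Max (insert 0 (t ` {..<m} \<union> \<tau> ` V))"
  have B1: "t i \<le> B" if "i < m" for i unfolding B_def using finV that by (intro Max_ge) auto
  have B2: "\<tau> v \<le> B" if "v \<in> V" for v unfolding B_def using finV that by (intro Max_ge) auto
  have I1: "((\<lambda>x. \<Sum>i<m. if x \<le> t i then w i else 0) has_integral (\<Sum>i<m. w i * t i)) {0..B}"
    using wt B1 by (intro has_integral_sum) (auto intro!: step_int)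
  have I2: "((\<lambda>x. M x) has_integral (\<Sum>v\<in>V. p v * \<tau> v)) {0..B}"
    unfolding M_def using pv B2 finV by (intro has_integral_sum) (auto intro!: step_int)
  have I2': "((\<lambda>x. 2 * M x) has_integral (2 * (\<Sum>v\<in>V. p v * \<tau> v))) {0..B}"
    using has_integral_mult_right[OF I2, of 2] by simp
  show ?thesis
    using has_integral_le[OF I1 I2'] pw by auto
qed


lemma visited_Suc: "k < length \<sigma> \<Longrightarrow> visited r \<sigma> (Suc k) = visited r \<sigma> k \<union> \<sigma> ! k"
  unfolding visited_def by (auto simp: take_Suc_conv_app_nth)

lemma visited_mono: "k \<le> l \<Longrightarrow> visited r \<sigma> k \<subseteq> visited r \<sigma> l"
  unfolding visited_def using set_take_subset_set_take[of k l \<sigma>] by auto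

lemma es_step:
  assumes "expanding_search W F r \<sigma>" "k < length \<sigma>"
  shows "\<sigma> ! k \<in> F" "\<exists>u w. \<sigma> ! k = {u, w} \<and> u \<in> visited r \<sigma> k \<and> w \<notin> visited r \<sigma> k"
  using assms unfolding expanding_search_def by auto

lemma es_visited:
  assumes es: "expanding_search W F r \<sigma>" and FW: "\<forall>e\<in>F. e \<subseteq> W" and "finite W" "r \<in> W"
  shows "k \<le> length \<sigma> \<Longrightarrow> visited r \<sigma> k \<subseteq> W \<and> card (visited r \<sigma> k) = Suc k"
proof (induction k)
  case 0
  then show ?case using assms by (simp add: visited_def)
next
  case (Suc k)
  then have k: "k < length \<sigma>" by simp
  obtain u w where uw: "\<sigma> ! k = {u, w}" "u \<in> visited r \<sigma> k" "w \<notin> visited r \<sigma> k"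
    using es_step(2)[OF es k] by blast
  have "\<sigma> ! k \<subseteq> W" using es_step(1)[OF es k] FW by auto
  moreover have "visited r \<sigma> (Suc k) = insert w (visited r \<sigma> k)"
    using visited_Suc[OF k] uw by auto
  moreover have "finite (visited r \<sigma> k)" using Suc k \<open>finite W\<close> finite_subset by auto
  ultimately show ?case using Suc k uw by auto
qed

lemma es_all:
  assumes es: "expanding_search W F r \<sigma>" and FW: "\<forall>e\<in>F. e \<subseteq> W" and fin: "finite W" and rW: "r \<in> W"
  shows "visited r \<sigma> (length \<sigma>) = W"
proof -
  have "visited r \<sigma> (length \<sigma>) \<subseteq> W" "card (visited r \<sigma> (length \<sigma>)) = Suc (length \<sigma>)"
    using es_visited[OF assms] by auto
  moreover have "Suc (length \<sigma>) = card W"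
    using es rW fin unfolding expanding_search_def
    by (simp add: card_Diff_singleton card_gt_0_iff) (metis Suc_pred card_gt_0_iff empty_iff)
  ultimately show ?thesis using fin by (simp add: card_subset_eq)
qed

lemma es_distinct:
  assumes es: "expanding_search W F r \<sigma>"
  shows "distinct \<sigma>"
proof (subst distinct_conv_nth, intro allI impI)
  fix i j assume ij: "i < length \<sigma>" "j < length \<sigma>" "i \<noteq> j"
  have *: "\<sigma> ! a \<noteq> \<sigma> ! b" if ab: "a < b" "b < length \<sigma>" for a b
  proof -
    obtain u w where uw: "\<sigma> ! b = {u, w}" "w \<notin> visited r \<sigma> b"
      using es_step(2)[OF es ab(2)] by blast
    have "\<sigma> ! a \<in> set (take b \<sigma>)" using ab by (auto simp: in_set_conv_nth)
    then have "\<sigma> ! a \<subseteq> visited r \<sigma> b" unfolding visited_def by auto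
    then show ?thesis using uw by auto
  qed
  show "\<sigma> ! i \<noteq> \<sigma> ! j"
    using ij *[of i j] *[of j i] by (cases "i < j") auto
qed

lemma search_time_le:
  assumes "P < length \<sigma>" "v \<in> \<sigma> ! P" "\<forall>e\<in>set \<sigma>. lam e \<ge> 0"
  shows "search_time lam r \<sigma> v \<le> sum_list (map lam (take (Suc P) \<sigma>))"
proof (cases "v = r")
  case True
  then show ?thesis using assms unfolding search_time_def by (auto intro!: sum_list_nonneg dest!: in_set_takeD)
next
  case False
  let ?l = "LEAST k. k < length \<sigma> \<and> v \<in> \<sigma> ! k"
  have "?l \<le> P" using assms by (intro Least_le) auto
  then obtain d where d: "Suc P = Suc ?l + d" by (metis add_Suc le_add_diff_inverse)
  have "sum_list (map lam (take (Suc P) \<sigma>)) = sum_list (map lam (take (Suc ?l) \<sigma>)) + sum_list (map lam (take d (drop (Suc ?l) \<sigma>)))"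
    unfolding d take_add by simp
  moreover have "sum_list (map lam (take d (drop (Suc ?l) \<sigma>))) \<ge> 0"
    using assms(3) by (intro sum_list_nonneg) (auto dest: in_set_takeD in_set_dropD)
  ultimately show ?thesis using False by (simp add: search_time_def)
qed


lemma sg_edge: "simple_graph V E \<Longrightarrow> e \<in> E \<Longrightarrow> \<exists>u w. e = {u, w} \<and> u \<noteq> w \<and> u \<in> V \<and> w \<in> V"
  unfolding simple_graph_def by auto

lemma sg_sub: "simple_graph V E \<Longrightarrow> e \<in> E \<Longrightarrow> e \<subseteq> V"
  using sg_edge by fastforce

lemma sg_finE: "simple_graph V E \<Longrightarrow> finite E"
proof -
  assume a: "simple_graph V E"
  then have "E \<subseteq> Pow V" using sg_sub by blast
  moreover have "finite V" using a unfolding simple_graph_def by auto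
  ultimately show "finite E" using finite_subset by blast
qed

lemma contr_len_pos:
  assumes sg: "simple_graph V E" and lp: "\<forall>e\<in>E. lam e > 0" and rS: "r \<in> S"
    and e: "e \<in> contr_edges V E r S"
  shows "contr_len E lam r S e > 0"
proof (cases "e \<inter> S = {}")
  case True
  then have "e \<in> E" using e rS unfolding contr_edges_def by auto
  then show ?thesis using True lp unfolding contr_len_def by auto
next
  case False
  then obtain w v where w: "e = {r, w}" "w \<in> V - S" "v \<in> S" "{v, w} \<in> E"
    using e unfolding contr_edges_def by auto
  let ?Z = "{e' \<in> E. e' \<inter> S \<noteq> {} \<and> e' - S = e - {r}}"
  have wr: "w \<noteq> r" using w rS by auto
  have "{v, w} \<in> ?Z" using w wr by auto
  moreover have "finite ?Z" using sg_finE[OF sg] by auto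
  ultimately have "Min (lam ` ?Z) > 0" using lp by (subst Min_gr_iff) auto
  then show ?thesis using False unfolding contr_len_def by simp
qed

lemma contr_len_le:
  assumes sg: "simple_graph V E" and rS: "r \<in> S" and e: "{u, w} \<in> E" "u \<in> S" "w \<notin> S"
  shows "contr_len E lam r S {r, w} \<le> lam {u, w}"
proof -
  let ?Z = "{e' \<in> E. e' \<inter> S \<noteq> {} \<and> e' - S = {r, w} - {r}}"
  have wr: "w \<noteq> r" using e rS by auto
  have "{u, w} \<in> ?Z" using e wr by auto
  moreover have "finite ?Z" using sg_finE[OF sg] by auto
  ultimately have "Min (lam ` ?Z) \<le> lam {u, w}" by (intro Min_le) auto
  then show ?thesis using rS unfolding contr_len_def by auto
qed

lemma contr_simple:
  assumes sg: "simple_graph V E" and rS: "r \<in> S"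
  shows "simple_graph (insert r (V - S)) (contr_edges V E r S)"
  unfolding simple_graph_def
proof (intro conjI ballI)
  show "finite (insert r (V - S))" using sg unfolding simple_graph_def by simp
  fix e assume e: "e \<in> contr_edges V E r S"
  show "\<exists>u w. e = {u, w} \<and> u \<noteq> w \<and> u \<in> insert r (V - S) \<and> w \<in> insert r (V - S)"
  proof (cases "e \<in> E \<and> e \<inter> S = {}")
    case True
    then have eE: "e \<in> E" by simp
    from sg_edge[OF sg eE] obtain u w where uw: "e = {u, w}" "u \<noteq> w" "u \<in> V" "w \<in> V" by blast
    have "u \<notin> S" "w \<notin> S" using True unfolding uw(1) by auto
    then show ?thesis using uw by (intro exI[of _ u] exI[of _ w]) blast
  next
    case False
    have "e \<in> {{r, w} | w. w \<in> V - S \<and> (\<exists>v\<in>S. {v, w} \<in> E)}"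
      using e False unfolding contr_edges_def by blast
    then obtain w where w: "e = {r, w}" "w \<in> V - S" by blast
    then have "r \<noteq> w" using rS by blast
    then show ?thesis using w by (intro exI[of _ r] exI[of _ w]) blast
  qed
qed

lemma leaf:
  assumes T: "rooted_subtree F s T" and e: "{u, w} \<in> F" and u: "u \<in> tree_verts s T"
    and w: "w \<notin> tree_verts s T"
  shows "rooted_subtree F s (insert {u, w} T) \<and> tree_verts s (insert {u, w} T) = insert w (tree_verts s T)"
proof -
  have tv: "tree_verts s (insert {u, w} T) = insert w (tree_verts s T)"
    using u unfolding tree_verts_def by auto
  have fT: "finite T" and cT: "card (tree_verts s T) = card T + 1" and sub: "T \<subseteq> F"
    and con: "connected_from (tree_verts s T) T s"
    using T unfolding rooted_subtree_def by auto
  have ne: "{u, w} \<notin> T" using w unfolding tree_verts_def by auto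
  have ftv: "finite (tree_verts s T)" using cT card.infinite by fastforce
  have c2: "card (tree_verts s (insert {u, w} T)) = card (insert {u, w} T) + 1"
    using tv cT ne fT ftv w by simp
  have con2: "connected_from (tree_verts s (insert {u, w} T)) (insert {u, w} T) s"
    unfolding connected_from_def
  proof
    fix v assume v: "v \<in> tree_verts s (insert {u, w} T)"
    have mono: "(adj T)\<^sup>* \<subseteq> (adj (insert {u, w} T))\<^sup>*"
      by (rule rtrancl_mono) (auto simp: adj_def)
    have su: "(s, u) \<in> (adj (insert {u, w} T))\<^sup>*" using con u mono unfolding connected_from_def by auto
    show "(s, v) \<in> (adj (insert {u, w} T))\<^sup>*"
    proof (cases "v = w")
      case True
      have "(u, w) \<in> adj (insert {u, w} T)" by (auto simp: adj_def)
      then show ?thesis using su True by (meson rtrancl.rtrancl_into_rtrancl)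
    next
      case False
      then have "v \<in> tree_verts s T" using v tv by auto
      then show ?thesis using con mono unfolding connected_from_def by auto
    qed
  qed
  show ?thesis using c2 con2 tv fT sub e unfolding rooted_subtree_def by auto
qed

lemma prefix_tree:
  assumes sg: "simple_graph V E" and lp: "\<forall>e\<in>E. lam e > 0" and rS: "r \<in> S"
    and es: "expanding_search V E r \<sigma>"
  shows "k \<le> length \<sigma> \<Longrightarrow> \<exists>T. rooted_subtree (contr_edges V E r S) r T \<and>
     tree_verts r T = insert r (visited r \<sigma> k - S) \<and>
     sum (contr_len E lam r S) T \<le> sum_list (map lam (take k \<sigma>))"
proof (induction k)
  case 0
  have "rooted_subtree (contr_edges V E r S) r {}"
    unfolding rooted_subtree_def tree_verts_def connected_from_def by auto
  then show ?case by (intro exI[of _ "{}"]) (auto simp: tree_verts_def visited_def)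
next
  case (Suc k)
  then have k: "k < length \<sigma>" by simp
  obtain T where T: "rooted_subtree (contr_edges V E r S) r T"
    "tree_verts r T = insert r (visited r \<sigma> k - S)"
    "sum (contr_len E lam r S) T \<le> sum_list (map lam (take k \<sigma>))"
    using Suc k by auto
  obtain u w where uw: "\<sigma> ! k = {u, w}" "u \<in> visited r \<sigma> k" "w \<notin> visited r \<sigma> k"
    using es_step(2)[OF es k] by blast
  have eE: "{u, w} \<in> E" using es_step(1)[OF es k] uw by simp
  have vis: "visited r \<sigma> (Suc k) = insert w (visited r \<sigma> k)" using visited_Suc[OF k] uw by auto
  have tk: "sum_list (map lam (take (Suc k) \<sigma>)) = sum_list (map lam (take k \<sigma>)) + lam {u, w}"
    using k uw by (simp add: take_Suc_conv_app_nth)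
  have lpos: "lam {u, w} > 0" using lp eE by auto
  have wV: "w \<in> V" "u \<in> V" using sg_sub[OF sg eE] by auto
  show ?case
  proof (cases "w \<in> S")
    case True
    then show ?thesis using T vis tk lpos by (intro exI[of _ T]) auto
  next
    case False
    have wr: "w \<noteq> r" using False rS by auto
    define u' where "u' = (if u \<in> S then r else u)"
    have u': "u' \<in> tree_verts r T" using T(2) uw unfolding u'_def by auto
    have w': "w \<notin> tree_verts r T" using T(2) uw wr by auto
    have eF: "{u', w} \<in> contr_edges V E r S"
      using eE False wV unfolding u'_def contr_edges_def by auto
    have cl: "contr_len E lam r S {u', w} \<le> lam {u, w}"
    proof (cases "u \<in> S")
      case True
      then show ?thesis using contr_len_le[OF sg rS eE True False] unfolding u'_def by simp
    next
      case False': False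
      then show ?thesis using False unfolding u'_def contr_len_def by auto
    qed
    have L: "rooted_subtree (contr_edges V E r S) r (insert {u', w} T)"
      "tree_verts r (insert {u', w} T) = insert w (tree_verts r T)"
      using leaf[OF T(1) eF u' w'] by auto
    have ne: "{u', w} \<notin> T" using w' unfolding tree_verts_def by auto
    have fT: "finite T" using T(1) unfolding rooted_subtree_def by auto
    have "sum (contr_len E lam r S) (insert {u', w} T) = contr_len E lam r S {u', w} + sum (contr_len E lam r S) T"
      using ne fT by simp
    then show ?thesis using L T vis tk cl False by (intro exI[of _ "insert {u', w} T"]) auto
  qed
qed


lemma contr_instance:
  assumes sg: "simple_graph V E" and lp: "\<forall>e\<in>E. lam e > 0" and rS: "r \<in> S" and rV: "r \<in> V"
    and es: "expanding_search V E r \<sigma>" and pn: "\<forall>v\<in>V. 0 \<le> p v"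
    and cont: "greedy_continue V p S"
  shows "mds_instance (insert r (V - S)) (contr_edges V E r S) (contr_len E lam r S) p r"
proof -
  obtain T where T: "rooted_subtree (contr_edges V E r S) r T"
     "tree_verts r T = insert r (visited r \<sigma> (length \<sigma>) - S)"
     "sum (contr_len E lam r S) T \<le> sum_list (map lam (take (length \<sigma>) \<sigma>))"
    using prefix_tree[OF sg lp rS es, of "length \<sigma>"] by auto
  have fV: "finite V" using sg unfolding simple_graph_def by auto
  have all: "visited r \<sigma> (length \<sigma>) = V" using es_all[OF es _ fV rV] sg_sub[OF sg] by auto
  obtain v where v: "v \<in> V - S" "p v > 0" using cont unfolding greedy_continue_def by auto
  have "v \<in> tree_verts r T" "v \<noteq> r" using T(2) all v rS by auto
  then have "T \<noteq> {}" unfolding tree_verts_def by auto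
  moreover have fT: "finite T" using T(1) unfolding rooted_subtree_def by auto
  moreover have "\<forall>e\<in>T. contr_len E lam r S e > 0"
    using T(1) contr_len_pos[OF sg lp rS] unfolding rooted_subtree_def by auto
  ultimately have "sum (contr_len E lam r S) T > 0" by (intro sum_pos) auto
  then have "mds_feasible (contr_edges V E r S) (contr_len E lam r S) r T"
    using T(1) unfolding mds_feasible_def by auto
  then show ?thesis unfolding mds_instance_def
    using contr_simple[OF sg rS] contr_len_pos[OF sg lp rS] pn rV by auto
qed

lemma dens_bound:
  assumes inst: "mds_instance W F len q s" and T: "rooted_subtree F s T"
    and tau: "sum len T \<le> \<tau>" and qs: "q s = 0" and rho: "\<rho> \<ge> 0" and al: "\<alpha> > 0"
    and rm: "\<rho> \<ge> max_density F len q s / \<alpha>"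
  shows "sum q (tree_verts s T) \<le> \<alpha> * \<rho> * \<tau>"
proof (cases "T = {}")
  case True
  then show ?thesis using qs tau rho al by (simp add: tree_verts_def)
next
  case False
  have sg: "simple_graph W F" and lp: "\<forall>e\<in>F. len e > 0" using inst unfolding mds_instance_def by auto
  have fT: "finite T" and TF: "T \<subseteq> F" using T unfolding rooted_subtree_def by auto
  have pos: "sum len T > 0" using False fT TF lp by (intro sum_pos) auto
  then have feas: "mds_feasible F len s T" using T unfolding mds_feasible_def by auto
  have "finite {T. mds_feasible F len s T}"
    using sg_finE[OF sg] by (rule finite_subset[rotated, OF finite_Pow_iff[THEN iffD2]])
      (auto simp: mds_feasible_def rooted_subtree_def)
  then have "Defs.density q len s T \<le> max_density F len q s"
    unfolding max_density_def using feas by (intro Max_ge) auto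
  also have "\<dots> \<le> \<alpha> * \<rho>" using rm al by (simp add: field_simps)
  finally have "sum q (tree_verts s T) / sum len T \<le> \<alpha> * \<rho>" unfolding Defs.density_def .
  then have "sum q (tree_verts s T) \<le> \<alpha> * \<rho> * sum len T" using pos by (simp add: field_simps)
  also have "\<dots> \<le> \<alpha> * \<rho> * \<tau>" using tau rho al by (intro mult_left_mono) auto
  finally show ?thesis .
qed

lemma block_facts:
  assumes T: "rooted_subtree F r T"
    and es: "expanding_search (tree_verts r T) T r (map (contr_edge r S) b)"
    and bl: "\<forall>e\<in>set b. e \<in> E \<and> (e \<inter> S \<noteq> {} \<longrightarrow> lam e = contr_len E lam r S (contr_edge r S e))"
  shows "sum_list (map lam b) = sum (contr_len E lam r S) T"
    "\<forall>v \<in> tree_verts r T - {r}. \<exists>k<length b. v \<in> b ! k"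
proof -
  let ?c = "map (contr_edge r S) b"
  have fT: "finite T" and cT: "card (tree_verts r T) = card T + 1"
    using T unfolding rooted_subtree_def by auto
  have ftv: "finite (tree_verts r T)" using cT card.infinite by fastforce
  have rT: "r \<in> tree_verts r T" unfolding tree_verts_def by auto
  have d: "distinct ?c" using es_distinct[OF es] .
  have len: "length ?c = card T"
    using es cT ftv rT unfolding expanding_search_def by (simp add: card_Diff_singleton)
  have sub: "set ?c \<subseteq> T" using es unfolding expanding_search_def by (auto simp: in_set_conv_nth)
  have setc: "set ?c = T"
    using card_subset_eq[OF fT sub] len distinct_card[OF d] by simp
  have "map lam b = map (contr_len E lam r S) ?c"
    using bl by (auto simp: contr_edge_def contr_len_def)
  then have "sum_list (map lam b) = sum_list (map (contr_len E lam r S) ?c)" by (simp only:)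
  also have "\<dots> = sum (contr_len E lam r S) T"
    using sum_list_distinct_conv_sum_set[OF d] setc by simp
  finally show "sum_list (map lam b) = sum (contr_len E lam r S) T" .
  show "\<forall>v \<in> tree_verts r T - {r}. \<exists>k<length b. v \<in> b ! k"
  proof
    fix v assume v: "v \<in> tree_verts r T - {r}"
    have "visited r ?c (length ?c) = tree_verts r T"
      using es_all[OF es _ ftv rT] unfolding tree_verts_def by auto
    then have "v \<in> \<Union>(set ?c)" using v unfolding visited_def by auto
    then obtain k where k: "k < length b" "v \<in> contr_edge r S (b ! k)"
      by (auto simp: in_set_conv_nth)
    then have "v \<in> b ! k" using v unfolding contr_edge_def by (auto split: if_splits)
    then show "\<exists>k<length b. v \<in> b ! k" using k by auto
  qed
qed


lemma st_char:
  assumes es: "expanding_search V E r \<sigma>" and sg: "simple_graph V E" and rV: "r \<in> V"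
    and v: "v \<in> V" "v \<noteq> r"
  shows "\<exists>l<length \<sigma>. v \<in> visited r \<sigma> (Suc l) \<and>
           search_time lam r \<sigma> v = sum_list (map lam (take (Suc l) \<sigma>))"
proof -
  have fV: "finite V" using sg unfolding simple_graph_def by auto
  have all: "visited r \<sigma> (length \<sigma>) = V" using es_all[OF es _ fV rV] sg_sub[OF sg] by auto
  then have "\<exists>k. k < length \<sigma> \<and> v \<in> \<sigma> ! k" using v unfolding visited_def
    by (auto simp: in_set_conv_nth)
  define l where "l = (LEAST k. k < length \<sigma> \<and> v \<in> \<sigma> ! k)"
  have l: "l < length \<sigma>" "v \<in> \<sigma> ! l" using LeastI_ex[OF \<open>\<exists>k. _\<close>] unfolding l_def by auto
  have "v \<in> visited r \<sigma> (Suc l)" using visited_Suc[OF l(1)] l(2) by auto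
  moreover have "search_time lam r \<sigma> v = sum_list (map lam (take (Suc l) \<sigma>))"
    using v unfolding search_time_def l_def by simp
  ultimately show ?thesis using l by auto
qed

lemma chain_step:
  fixes S :: "nat \<Rightarrow> 'a set"
  shows "v \<notin> S 0 \<Longrightarrow> v \<in> S m \<Longrightarrow> \<exists>i<m. v \<notin> S i \<and> v \<in> S (Suc i)"
proof (induction m)
  case 0 then show ?case by simp
next
  case (Suc m)
  then show ?case by (cases "v \<in> S m") (auto intro: less_SucI)
qed

lemma concat_sum:
  "n \<le> length bs \<Longrightarrow> sum_list (map f (concat (take n bs))) = (\<Sum>j<n. sum_list (map f (bs ! j)))"
proof (induction n)
  case 0 then show ?case by simp
next
  case (Suc n)
  then show ?case by (simp add: take_Suc_conv_app_nth)
qed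

lemma prefix_mono:
  assumes "a \<le> b" "\<forall>e\<in>set xs. lam e \<ge> (0::real)"
  shows "sum_list (map lam (take a xs)) \<le> sum_list (map lam (take b xs))"
proof -
  obtain d where d: "b = a + d" using assms(1) le_Suc_ex by blast
  have "sum_list (map lam (take d (drop a xs))) \<ge> 0"
    using assms(2) by (intro sum_list_nonneg) (auto dest!: in_set_takeD in_set_dropD)
  then show ?thesis unfolding d take_add by simp
qed



theorem theorem2:
  fixes V :: "'v set" and E :: "'v set set" and lam :: "'v set \<Rightarrow> real"
    and p :: "'v \<Rightarrow> real" and r :: 'v and \<alpha> :: real and A :: "'v mds_algorithm"
    and \<sigma>g \<sigma>opt :: "'v set list"
  assumes graph: "simple_graph V E" and root: "r \<in> V"
    and conn: "connected_from V E r"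
    and len_pos: "\<forall>e\<in>E. lam e > 0"
    and p_nonneg: "\<forall>v\<in>V. 0 \<le> p v \<and> p v \<le> 1" and p_root: "p r = 0"
    and p_sum: "(\<Sum>v\<in>V. p v) = 1"
    and alpha: "\<alpha> \<ge> 1"
    and approx: "mds_approx \<alpha> A"
    and greedy: "greedy_output V E lam p r A \<sigma>g"
    and opt: "expanding_search V E r \<sigma>opt"
    and opt_min: "\<forall>\<sigma>. expanding_search V E r \<sigma> \<longrightarrow>
                    search_cost V p lam r \<sigma>opt \<le> search_cost V p lam r \<sigma>"
  shows "search_cost V p lam r \<sigma>g \<le> 4 * \<alpha> * search_cost V p lam r \<sigma>opt"
proof -
  define S where "S i = greedy_set V E lam p r A i" for i
  define T where "T i = greedy_tree V E lam p r A (S i)" for i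
  define F where "F i = contr_edges V E r (S i)" for i
  define ln where "ln i = contr_len E lam r (S i)" for i
  define L where "L i = sum (ln i) (T i)" for i
  define R where "R i = (\<Sum>v\<in>V - S i. p v)" for i
  define w where "w i = sum p (tree_verts r (T i))" for i
  define \<rho> where "\<rho> i = Defs.density p (ln i) r (T i)" for i
  define t where "t i = R i / (2 * \<alpha> * \<rho> i)" for i
  define \<tau> where "\<tau> k = sum_list (map lam (take k \<sigma>opt))" for k
  define st where "st v = search_time lam r \<sigma>opt v" for v
  define n where "n = length \<sigma>opt"
  have pn: "\<forall>v\<in>V. 0 \<le> p v" using p_nonneg by auto
  have fV: "finite V" using graph unfolding simple_graph_def by auto
  have al: "\<alpha> > 0" using alpha by simp
  have Ssuc: "S (Suc i) = S i \<union> tree_verts r (T i)" for i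
    unfolding S_def T_def by simp
  have rS: "r \<in> S i" for i
    by (induction i) (auto simp: Ssuc, simp add: S_def)
  have Smono: "S i \<subseteq> S j" if "i \<le> j" for i j
    using lift_Suc_mono_le[of S i j] that Ssuc by auto
  obtain m bs tl where G:
    "\<forall>i < m. greedy_continue V p (S i)" "\<not> greedy_continue V p (S m)"
    "length bs = m" "\<forall>i < m. greedy_block V E lam p r A i (bs ! i)"
    "\<sigma>g = concat bs @ tl" "expanding_search V E r \<sigma>g"
    using greedy unfolding greedy_output_def S_def by blast
  have inst: "mds_instance (insert r (V - S i)) (F i) (ln i) p r" if "i < m" for i
    unfolding F_def ln_def using contr_instance[OF graph len_pos rS root opt pn] G(1) that by auto
  have Tdef: "T i = A (insert r (V - S i)) (F i) (ln i) p r" for i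
    unfolding T_def F_def ln_def greedy_tree_def by simp
  have feas: "mds_feasible (F i) (ln i) r (T i)" and rho_ge: "\<rho> i \<ge> max_density (F i) (ln i) p r / \<alpha>"
    if "i < m" for i
    using approx inst[OF that] unfolding mds_approx_def Tdef \<rho>_def by auto
  have rt: "rooted_subtree (F i) r (T i)" and Lpos: "L i > 0" if "i < m" for i
    using feas[OF that] unfolding mds_feasible_def L_def by auto
  have tvsub: "tree_verts r (T i) \<subseteq> insert r (V - S i)" if "i < m" for i
  proof -
    have "\<forall>e\<in>F i. e \<subseteq> insert r (V - S i)"
      using sg_sub[OF contr_simple[OF graph rS]] unfolding F_def by blast
    then show ?thesis using rt[OF that] unfolding rooted_subtree_def tree_verts_def by auto
  qed
  have ftv: "finite (tree_verts r (T i))" if "i < m" for i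
    using tvsub[OF that] fV finite_subset by blast
  have w_nonneg: "w i \<ge> 0" if "i < m" for i
    unfolding w_def using tvsub[OF that] pn p_root by (intro sum_nonneg) auto
  have w_rho: "w i = \<rho> i * L i" if "i < m" for i
    using Lpos[OF that] unfolding w_def \<rho>_def Defs.density_def L_def by simp
  have rho_nonneg: "\<rho> i \<ge> 0" if "i < m" for i
    using w_nonneg[OF that] Lpos[OF that] w_rho[OF that] by (simp add: zero_le_mult_iff)
  have wR: "w i = R i - R (Suc i)" if "i < m" for i
  proof -
    let ?tv = "tree_verts r (T i)"
    have rtv: "r \<in> ?tv" unfolding tree_verts_def by simp
    have sub: "?tv - {r} \<subseteq> V - S i" using tvsub[OF that] by auto
    have eq: "V - S i - (?tv - {r}) = V - S (Suc i)" using rS[of i] unfolding Ssuc by auto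
    have "R i = (\<Sum>v\<in>V - S i - (?tv - {r}). p v) + (\<Sum>v\<in>?tv - {r}. p v)"
      unfolding R_def using fV sub by (intro sum.subset_diff) auto
    also have "\<dots> = R (Suc i) + (\<Sum>v\<in>?tv - {r}. p v)" unfolding eq R_def ..
    also have "(\<Sum>v\<in>?tv - {r}. p v) = w i"
      unfolding w_def using sum.remove[OF ftv[OF that] rtv, of p] p_root by simp
    finally show ?thesis by simp
  qed
  have lam_nn: "\<forall>e\<in>set \<sigma>. lam e \<ge> 0" if "expanding_search V E r \<sigma>" for \<sigma>
    using that len_pos unfolding expanding_search_def by (auto simp: in_set_conv_nth less_imp_le)
  have visV: "visited r \<sigma>opt k \<subseteq> V" if "k \<le> n" for k
    using es_visited[OF opt _ fV root] sg_sub[OF graph] that unfolding n_def by auto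
  have G1: "(\<Sum>v\<in>visited r \<sigma>opt k - S i. p v) \<le> \<alpha> * \<rho> i * \<tau> k" if i: "i < m" and k: "k \<le> n" for i k
  proof -
    obtain T' where T': "rooted_subtree (F i) r T'" "tree_verts r T' = insert r (visited r \<sigma>opt k - S i)"
      "sum (ln i) T' \<le> \<tau> k"
      using prefix_tree[OF graph len_pos rS[of i] opt, of k] k unfolding F_def ln_def \<tau>_def n_def by auto
    have "sum p (tree_verts r T') \<le> \<alpha> * \<rho> i * \<tau> k"
      by (rule dens_bound[OF inst[OF i] T'(1) T'(3) p_root rho_nonneg[OF i] al rho_ge[OF i]])
    moreover have "sum p (tree_verts r T') = (\<Sum>v\<in>visited r \<sigma>opt k - S i. p v)"
      unfolding T'(2) using rS[of i] p_root visV[OF k] fV finite_subset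
      by (subst sum.insert) auto
    ultimately show ?thesis by simp
  qed
  have visall: "visited r \<sigma>opt n = V"
    using es_all[OF opt _ fV root] sg_sub[OF graph] unfolding n_def by auto
  have Rpos: "R i > 0" if i: "i < m" for i
  proof -
    obtain v where v: "v \<in> V - S i" "p v > 0" using G(1) i unfolding greedy_continue_def by auto
    show ?thesis unfolding R_def using v fV pn by (intro sum_pos2[of _ v]) auto
  qed
  have rho_pos: "\<rho> i > 0" if "i < m" for i
  proof -
    have "R i \<le> \<alpha> * \<rho> i * \<tau> n" using G1[OF that order.refl] visall unfolding R_def by simp
    then have "\<rho> i \<noteq> 0" using Rpos[OF that] by auto
    then show ?thesis using rho_nonneg[OF that] by simp
  qed
  have C: "(\<Sum>v\<in>V - S i. if st v \<le> x then p v else 0) \<le> \<alpha> * \<rho> i * x" if i: "i < m" and x: "x \<ge> 0" for i x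
  proof -
    have ex: "\<exists>k. k \<le> n \<and> \<tau> k \<le> x" using x by (intro exI[of _ 0]) (simp add: \<tau>_def)
    define k where "k = (GREATEST k. k \<le> n \<and> \<tau> k \<le> x)"
    have k: "k \<le> n" "\<tau> k \<le> x" using GreatestI_nat[of "\<lambda>k. k \<le> n \<and> \<tau> k \<le> x" 0 n] ex x
      unfolding k_def by (auto simp: \<tau>_def)
    have incl: "{v \<in> V - S i. st v \<le> x} \<subseteq> visited r \<sigma>opt k - S i"
    proof
      fix v assume v: "v \<in> {v \<in> V - S i. st v \<le> x}"
      then have vr: "v \<noteq> r" using rS[of i] by auto
      obtain l where l: "l < n" "v \<in> visited r \<sigma>opt (Suc l)" "st v = \<tau> (Suc l)"
        using st_char[OF opt graph root _ vr, of lam] v unfolding st_def \<tau>_def n_def by auto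
      have lx: "Suc l \<le> n \<and> \<tau> (Suc l) \<le> x" using l v by simp
      have "Suc l \<le> k" unfolding k_def
        by (rule Greatest_le_nat[of "\<lambda>k. k \<le> n \<and> \<tau> k \<le> x" "Suc l" n, OF lx]) simp
      then have "visited r \<sigma>opt (Suc l) \<subseteq> visited r \<sigma>opt k" by (rule visited_mono)
      then show "v \<in> visited r \<sigma>opt k - S i" using l v by blast
    qed
    have "(\<Sum>v\<in>V - S i. if st v \<le> x then p v else 0) = (\<Sum>v\<in>{v \<in> V - S i. st v \<le> x}. p v)"
      by (rule sum.inter_filter[symmetric]) (use fV in auto)
    also have "\<dots> \<le> (\<Sum>v\<in>visited r \<sigma>opt k - S i. p v)"
      using incl visV[OF k(1)] pn finite_Diff[OF finite_subset[OF visV[OF k(1)] fV]] by (intro sum_mono2) auto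
    also have "\<dots> \<le> \<alpha> * \<rho> i * \<tau> k" using G1[OF i k(1)] .
    also have "\<dots> \<le> \<alpha> * \<rho> i * x" using k(2) al rho_nonneg[OF i] by (intro mult_left_mono) auto
    finally show ?thesis .
  qed
  have key: "R i \<le> 2 * (\<Sum>v\<in>V. if t i \<le> st v then p v else 0)" if i: "i < m" for i
  proof -
    have t0: "t i \<ge> 0" unfolding t_def using Rpos[OF i] rho_pos[OF i] al by simp
    have at: "\<alpha> * \<rho> i * t i = R i / 2" unfolding t_def using rho_pos[OF i] al by (simp add: field_simps)
    have "R i = (\<Sum>v\<in>V - S i. if t i \<le> st v then p v else 0) + (\<Sum>v\<in>V - S i. if t i \<le> st v then 0 else p v)"
      unfolding R_def sum.distrib[symmetric] by (intro sum.cong) auto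
    also have "(\<Sum>v\<in>V - S i. if t i \<le> st v then 0 else p v) \<le> (\<Sum>v\<in>V - S i. if st v \<le> t i then p v else 0)"
      using pn by (intro sum_mono) auto
    also have "\<dots> \<le> R i / 2" using C[OF i t0] at by simp
    also have "(\<Sum>v\<in>V - S i. if t i \<le> st v then p v else 0) \<le> (\<Sum>v\<in>V. if t i \<le> st v then p v else 0)"
      using fV pn by (intro sum_mono2) auto
    finally show ?thesis by simp
  qed
  have st_nn: "\<forall>v\<in>V. p v \<ge> 0 \<and> st v \<ge> 0"
    using pn lam_nn[OF opt] unfolding st_def search_time_def
    by (auto intro!: sum_list_nonneg dest!: in_set_takeD)
  have wt: "\<forall>i<m. w i \<ge> 0 \<and> t i \<ge> 0"
    using w_nonneg Rpos rho_pos al unfolding t_def by (auto intro: less_imp_le)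
  have Rm: "R m \<ge> 0" unfolding R_def using pn by (intro sum_nonneg) auto
  have H: "(\<Sum>i<m. w i * t i) \<le> 2 * (\<Sum>v\<in>V. p v * st v)"
    by (rule hist[where V=V and p=p and \<tau>=st and m=m and w=w and t=t and R=R]) (use fV st_nn wt Rm wR key in auto)
  have LR: "L i * R i = 2 * \<alpha> * (w i * t i)" if "i < m" for i
    unfolding t_def w_rho[OF that] using rho_pos[OF that] al by (simp add: field_simps)
  have blk: "sum_list (map lam (bs ! i)) = L i" "\<forall>v \<in> tree_verts r (T i) - {r}. \<exists>k<length (bs ! i). v \<in> bs ! i ! k"
    if i: "i < m" for i
  proof -
    have b: "expanding_search (tree_verts r (T i)) (T i) r (map (contr_edge r (S i)) (bs ! i))"
      "\<forall>e\<in>set (bs ! i). e \<in> E \<and> (e \<inter> S i \<noteq> {} \<longrightarrow> lam e = contr_len E lam r (S i) (contr_edge r (S i) e))"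
      using G(4) i unfolding greedy_block_def Let_def S_def T_def by auto
    show "sum_list (map lam (bs ! i)) = L i" "\<forall>v \<in> tree_verts r (T i) - {r}. \<exists>k<length (bs ! i). v \<in> bs ! i ! k"
      using block_facts[OF rt[OF i] b] unfolding L_def ln_def by auto
  qed
  have stg: "search_time lam r \<sigma>g v \<le> (\<Sum>j<m. if v \<notin> S j then L j else 0)"
    if v: "v \<in> V" "p v > 0" for v
  proof -
    have vm: "v \<in> S m" using G(2) v unfolding greedy_continue_def by auto
    have vr: "v \<noteq> r" using v p_root by auto
    have "v \<notin> S 0" using vr unfolding S_def by simp
    then obtain i where i: "i < m" "v \<notin> S i" "v \<in> S (Suc i)" using chain_step[of v S m] vm by auto
    then have "v \<in> tree_verts r (T i) - {r}" using vr Ssuc by auto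
    then obtain k where k: "k < length (bs ! i)" "v \<in> bs ! i ! k" using blk(2)[OF i(1)] by auto
    have il: "i < length bs" using i G(3) by simp
    have split: "\<sigma>g = concat (take i bs) @ bs ! i @ (concat (drop (Suc i) bs) @ tl)"
      unfolding G(5) using id_take_nth_drop[OF il] by (metis append.assoc concat.simps(2) concat_append)
    define P where "P = length (concat (take i bs)) + k"
    have P: "P < length \<sigma>g" "\<sigma>g ! P = bs ! i ! k"
      unfolding P_def using k by (subst split, simp add: nth_append)+
    have "search_time lam r \<sigma>g v \<le> sum_list (map lam (take (Suc P) \<sigma>g))"
      using search_time_le[OF P(1) _ lam_nn[OF G(6)]] P(2) k by simp
    also have "\<dots> \<le> sum_list (map lam (take (length (concat (take (Suc i) bs))) \<sigma>g))"
      using k il by (intro prefix_mono[OF _ lam_nn[OF G(6)]]) (simp add: P_def take_Suc_conv_app_nth)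
    also have "take (length (concat (take (Suc i) bs))) \<sigma>g = concat (take (Suc i) bs)"
      unfolding G(5) by (metis append_take_drop_id concat_append append.assoc append_eq_conv_conj)
    also have "sum_list (map lam (concat (take (Suc i) bs))) = (\<Sum>j<Suc i. sum_list (map lam (bs ! j)))"
      using il by (intro concat_sum) simp
    also have "\<dots> = (\<Sum>j<Suc i. L j)" using blk(1) i by (intro sum.cong) auto
    also have "\<dots> = (\<Sum>j<m. if j < Suc i then L j else 0)"
    proof -
      have "{j \<in> {..<m}. j < Suc i} = {..<Suc i}" using i by auto
      then show ?thesis using sum.inter_filter[of "{..<m}" L "\<lambda>j. j < Suc i"] by simp
    qed
    also have "\<dots> = (\<Sum>j<m. if v \<notin> S j then L j else 0)"
    proof (intro sum.cong refl)
      fix j assume "j \<in> {..<m}"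
      have "v \<notin> S j \<longleftrightarrow> j < Suc i"
      proof
        assume "v \<notin> S j" then show "j < Suc i" using Smono[of "Suc i" j] i by (cases "j < Suc i") auto
      next
        assume "j < Suc i" then show "v \<notin> S j" using Smono[of j i] i by auto
      qed
      then show "(if j < Suc i then L j else 0) = (if v \<notin> S j then L j else 0)" by simp
    qed
    finally show ?thesis .
  qed
  have "search_cost V p lam r \<sigma>g \<le> (\<Sum>v\<in>V. p v * (\<Sum>j<m. if v \<notin> S j then L j else 0))"
    unfolding search_cost_def
  proof (intro sum_mono)
    fix v assume v: "v \<in> V"
    show "p v * search_time lam r \<sigma>g v \<le> p v * (\<Sum>j<m. if v \<notin> S j then L j else 0)"
    proof (cases "p v = 0")
      case False
      then have "p v > 0" using pn v by force
      then show ?thesis using stg[OF v] by (intro mult_left_mono) auto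
    qed simp
  qed
  also have "\<dots> = (\<Sum>v\<in>V. \<Sum>j<m. if v \<notin> S j then L j * p v else 0)"
    unfolding sum_distrib_left by (intro sum.cong refl) auto
  also have "\<dots> = (\<Sum>j<m. \<Sum>v\<in>V. if v \<notin> S j then L j * p v else 0)"
    by (rule sum.swap)
  also have "\<dots> = (\<Sum>j<m. L j * R j)"
  proof (intro sum.cong refl)
    fix j
    have "(\<Sum>v\<in>V. if v \<notin> S j then L j * p v else 0) = (\<Sum>v\<in>{v \<in> V. v \<notin> S j}. L j * p v)"
      using fV by (rule sum.inter_filter[symmetric])
    also have "{v \<in> V. v \<notin> S j} = V - S j" by auto
    finally show "(\<Sum>v\<in>V. if v \<notin> S j then L j * p v else 0) = L j * R j"
      unfolding R_def by (simp add: sum_distrib_left)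
  qed
  also have "\<dots> = 2 * \<alpha> * (\<Sum>i<m. w i * t i)"
    unfolding sum_distrib_left using LR by (intro sum.cong) auto
  also have "\<dots> \<le> 2 * \<alpha> * (2 * (\<Sum>v\<in>V. p v * st v))"
    using H al by (intro mult_left_mono) auto
  also have "\<dots> = 4 * \<alpha> * search_cost V p lam r \<sigma>opt"
    unfolding search_cost_def st_def by simp
  finally show ?thesis .
qed


end
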